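(* Let $\theta\in(0,\pi)$. Then for all $x,y\in S_\theta$, $$s_{S_\theta}(x,y)\le{\rm th}(\rho_{S_\theta}(x,y)/2)\le(\pi/\theta)\sin(\theta/2)\,s_{S_\theta}(x,y),$$ and this inequality is sharp.
   Context: $S_\theta=\{x\in\mathbb{C}:0<\arg(x)<\theta\}$. For a domain $G\subsetneq\mathbb{C}$, $s_G(x,y)=\frac{|x-y|}{\inf_{z\in\partial G}(|x-z|+|z-y|)}$. The hyperbolic metric of $\mathbb{H}^2=\{z:{\rm Im}\,z>0\}$ satisfies ${\rm th}(\rho_{\mathbb{H}^2}(u,v)/2)=|u-v|/|u-\overline{v}|$, and $\rho_{S_\theta}(x,y)=\rho_{\mathbb{H}^2}(x^{\pi/\theta},y^{\pi/\theta})$ (principal branch power, a conformal map of $S_\theta$ onto $\mathbb{H}^2$). *)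

theory Defs
  imports "HOL-Analysis.Analysis"
begin

definition sector :: "real \<Rightarrow> complex set" where
  "sector \<theta> = {x. 0 < Arg x \<and> Arg x < \<theta>}"

definition s_metric :: "complex set \<Rightarrow> complex \<Rightarrow> complex \<Rightarrow> real" where
  "s_metric G x y = cmod (x - y) / (INF z\<in>frontier G. cmod (x - z) + cmod (z - y))"

text \<open>Hyperbolic metric of the upper half plane, via th(rho/2) = |u-v|/|u-conj v|.\<close>
definition rho_H :: "complex \<Rightarrow> complex \<Rightarrow> real" where
  "rho_H u v = 2 * artanh (cmod (u - v) / cmod (u - cnj v))"

text \<open>Hyperbolic metric of the sector, via the principal-branch power map.\<close>
definition rho_S :: "real \<Rightarrow> complex \<Rightarrow> complex \<Rightarrow> real" where
  "rho_S \<theta> x y = rho_H (x powr of_real (pi / \<theta>)) (y powr of_real (pi / \<theta>))"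

end

theory Submission
  imports Defs
begin

lemma sin_le_k_sin:
  fixes k t :: real
  assumes k: "1 \<le> k" and t: "0 \<le> t" and kt: "k*t \<le> pi"
  shows "sin (k*t) \<le> k * sin t"
proof (cases "t = 0")
  case True then show ?thesis by simp
next
  case False
  with t have t0: "0 < t" by simp
  have "\<exists>z. 0 < z \<and> z < t \<and> (k * sin t - sin (k*t)) - (k * sin 0 - sin (k*0)) = (t - 0) * (k * cos z - cos (k*z) * k)"
    by (rule MVT2[OF t0]) (auto intro!: derivative_eq_intros)
  then obtain z where z: "0 < z" "z < t" and eq: "k * sin t - sin (k*t) = t * (k * cos z - cos (k*z) * k)"
    by auto
  have "z \<le> k*z" using z k by (simp add: mult_le_cancel_right1)
  moreover have "k*z \<le> pi" using kt z k by (smt (verit) mult_left_mono)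
  ultimately have "cos (k*z) \<le> cos z" using z by (intro cos_monotone_0_pi_le) auto
  then have "0 \<le> k * cos z - cos (k*z) * k" using k by (smt (verit) mult_left_mono mult.commute)
  with eq t have "0 \<le> k * sin t - sin (k*t)" by simp
  then show ?thesis by simp
qed

lemma psi_nonpos:
  fixes k t :: real
  assumes k: "1 \<le> k" and t: "0 \<le> t" and kt: "k*t \<le> pi"
  shows "k * cos (k*t) * sin t - sin (k*t) * cos t \<le> 0"
proof (cases "t = 0")
  case True then show ?thesis by simp
next
  case False
  with t have t0: "0 < t" by simp
  let ?f = "\<lambda>u. k * cos (k*u) * sin u - sin (k*u) * cos u"
  have "\<exists>z. 0 < z \<and> z < t \<and> ?f t - ?f 0 = (t - 0) * ((1 - k^2) * sin (k*z) * sin z)"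
  proof (rule MVT2[OF t0])
    fix x assume "0 \<le> x" "x \<le> t"
    show "DERIV ?f x :> ((1 - k^2) * sin (k*x) * sin x)"
      by (rule derivative_eq_intros refl | simp)+ (simp add: algebra_simps power2_eq_square)
  qed
  then obtain z where z: "0 < z" "z < t" and eq: "?f t - ?f 0 = t * ((1 - k^2) * sin (k*z) * sin z)"
    by auto
  have kz: "k*z \<le> pi" using kt z k by (smt (verit) mult_left_mono)
  have "z \<le> k*z" using z k by (simp add: mult_le_cancel_right1)
  then have zpi: "z \<le> pi" using kz by simp
  have "0 \<le> sin (k*z)" using kz z k by (intro sin_ge_zero) auto
  moreover have "0 \<le> sin z" using zpi z by (intro sin_ge_zero) auto
  moreover have "1 - k^2 \<le> 0" using k by (simp add: power2_eq_square) (metis mult_mono' mult_1 zero_le_one)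
  ultimately have "(1 - k^2) * sin (k*z) * sin z \<le> 0"
    by (metis mult_nonneg_nonneg mult_nonpos_nonneg mult.assoc)
  then have "t * ((1 - k^2) * sin (k*z) * sin z) \<le> 0" using t by (simp add: mult_nonneg_nonpos)
  with eq show ?thesis by simp
qed

lemma sin_ratio_mono:
  fixes k h m :: real
  assumes k: "1 \<le> k" and h: "0 \<le> h" and hm: "h \<le> m" and km: "k*m < pi"
  shows "sin h * sin (k*m) \<le> sin (k*h) * sin m"
proof (cases "h = 0 \<or> h = m")
  case True then show ?thesis by auto
next
  case False
  with h hm have h0: "0 < h" and hm': "h < m" by auto
  have mk: "m \<le> k*m" using h0 hm k by (simp add: mult_le_cancel_right1)
  let ?f = "\<lambda>u. sin (k*u) / sin u"
  have sinpos: "0 < sin s" if "h \<le> s" "s \<le> m" for s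
    using that h0 mk km by (intro sin_gt_zero; linarith)
  have "\<exists>z. h < z \<and> z < m \<and> ?f m - ?f h = (m - h) * ((k * cos (k*z) * sin z - sin (k*z) * cos z) / (sin z)^2)"
  proof (rule MVT2[OF hm'])
    fix x assume x: "h \<le> x" "x \<le> m"
    have "sin x \<noteq> 0" using sinpos[OF x] by simp
    then show "DERIV ?f x :> ((k * cos (k*x) * sin x - sin (k*x) * cos x) / (sin x)^2)"
      by (auto intro!: derivative_eq_intros simp: field_simps power2_eq_square)
  qed
  then obtain z where z: "h < z" "z < m" and eq: "?f m - ?f h = (m - h) * ((k * cos (k*z) * sin z - sin (k*z) * cos z) / (sin z)^2)"
    by auto
  have "k*z \<le> pi" using km z k by (smt (verit) mult_left_mono)
  then have "k * cos (k*z) * sin z - sin (k*z) * cos z \<le> 0" using psi_nonpos[OF k] z h0 by simp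
  then have "(k * cos (k*z) * sin z - sin (k*z) * cos z) / (sin z)^2 \<le> 0"
    by (simp add: divide_nonpos_nonneg)
  then have "?f m \<le> ?f h" using eq hm' by (smt (verit) mult_nonneg_nonpos)
  moreover have "0 < sin h" "0 < sin m" using sinpos hm' by auto
  ultimately show ?thesis by (simp add: field_simps)
qed

lemma sinh_ge_self:
  fixes w :: real assumes "0 \<le> w" shows "w \<le> sinh w"
proof (cases "w = 0")
  case True then show ?thesis by simp
next
  case False
  with assms have w0: "0 < w" by simp
  have "\<exists>z. 0 < z \<and> z < w \<and> (sinh w - w) - (sinh 0 - 0) = (w - 0) * (cosh z - 1)"
    by (rule MVT2[OF w0]) (auto intro!: derivative_eq_intros)
  then obtain z where "sinh w - w = w * (cosh z - 1)" by auto
  moreover have "0 \<le> cosh z - 1" using cosh_real_ge_1[of z] by simp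
  ultimately show ?thesis using w0 by (smt (verit) mult_nonneg_nonneg)
qed

lemma sinh_k_ge:
  fixes k y :: real
  assumes k: "1 \<le> k" and y: "0 \<le> y"
  shows "k * sinh y \<le> sinh (k*y)"
proof (cases "y = 0")
  case True then show ?thesis by simp
next
  case False
  with y have y0: "0 < y" by simp
  have "\<exists>z. 0 < z \<and> z < y \<and> (sinh (k*y) - k * sinh y) - (sinh (k*0) - k * sinh 0) = (y - 0) * (cosh (k*z) * k - k * cosh z)"
    by (rule MVT2[OF y0]) (auto intro!: derivative_eq_intros)
  then obtain z where z: "0 < z" "z < y" and eq: "sinh (k*y) - k * sinh y = y * (cosh (k*z) * k - k * cosh z)"
    by auto
  have "z \<le> k*z" using z k by (simp add: mult_le_cancel_right1)
  then have "cosh z \<le> cosh (k*z)" using z by (subst cosh_real_nonneg_le_iff) auto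
  then have "0 \<le> cosh (k*z) * k - k * cosh z" using k by (smt (verit) mult_left_mono mult.commute)
  with eq y show ?thesis by (smt (verit) mult_nonneg_nonneg)
qed

lemma phi3_nonneg:
  fixes z :: real assumes z: "0 \<le> z"
  shows "0 \<le> sinh z - z * cosh z + sinh z ^ 3 / 3"
proof (cases "z = 0")
  case True then show ?thesis by simp
next
  case False
  with z have z0: "0 < z" by simp
  let ?f = "\<lambda>u::real. sinh u - u * cosh u + sinh u ^ 3 / 3"
  have "\<exists>t. 0 < t \<and> t < z \<and> ?f z - ?f 0 = (z - 0) * (sinh t * (sinh t * cosh t - t))"
  proof (rule MVT2[OF z0])
    fix x :: real
    show "DERIV ?f x :> (sinh x * (sinh x * cosh x - x))"
      by (auto intro!: derivative_eq_intros simp: algebra_simps power2_eq_square)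
  qed
  then obtain t where t: "0 < t" "t < z" and eq: "?f z - ?f 0 = z * (sinh t * (sinh t * cosh t - t))"
    by auto
  have "2*t \<le> sinh (2*t)" using t by (intro sinh_ge_self) auto
  then have "t \<le> sinh t * cosh t" by (simp add: sinh_double)
  moreover have "0 \<le> sinh t" using t by simp
  ultimately have "0 \<le> sinh t * (sinh t * cosh t - t)" by simp
  with eq z0 show ?thesis by simp
qed

lemma hyp_key:
  fixes k y :: real
  assumes k: "1 \<le> k" and y: "0 < y"
  shows "1 / (sinh y)^2 \<le> k^2 / (sinh (k*y))^2 + (k^2 - 1) / 3"
proof (cases "k = 1")
  case True then show ?thesis by simp
next
  case False
  with k have k1: "1 < k" by simp
  let ?H = "\<lambda>c::real. c^2 / (sinh (c*y))^2 + (c^2 - 1) / 3"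
  have "\<exists>c. 1 < c \<and> c < k \<and> ?H k - ?H 1 = (k - 1) * ((2*c / (sinh (c*y))^3) * (sinh (c*y) - (c*y) * cosh (c*y) + sinh (c*y) ^ 3 / 3))"
  proof (rule MVT2[OF k1])
    fix x :: real assume x: "1 \<le> x" "x \<le> k"
    then have "0 < x*y" using y by simp
    then have sx: "sinh (x*y) \<noteq> 0" by (metis sinh_real_pos_iff less_irrefl)
    show "DERIV ?H x :> ((2*x / (sinh (x*y))^3) * (sinh (x*y) - (x*y) * cosh (x*y) + sinh (x*y) ^ 3 / 3))"
      using sx by (auto intro!: derivative_eq_intros simp: field_simps power2_eq_square power3_eq_cube)
  qed
  then obtain c where c: "1 < c" "c < k" and eq: "?H k - ?H 1 = (k - 1) * ((2*c / (sinh (c*y))^3) * (sinh (c*y) - (c*y) * cosh (c*y) + sinh (c*y) ^ 3 / 3))"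
    by auto
  have cy: "0 < c*y" using c y by simp
  then have "0 < sinh (c*y)" by simp
  then have "0 \<le> 2*c / (sinh (c*y))^3" using c by simp
  moreover have "0 \<le> sinh (c*y) - (c*y) * cosh (c*y) + sinh (c*y) ^ 3 / 3" using cy by (intro phi3_nonneg) simp
  ultimately have "0 \<le> (k - 1) * ((2*c / (sinh (c*y))^3) * (sinh (c*y) - (c*y) * cosh (c*y) + sinh (c*y) ^ 3 / 3))"
    using k1 by (intro mult_nonneg_nonneg) auto
  then have "0 \<le> ?H k - ?H 1" by (subst eq)
  then show ?thesis by simp
qed

lemma tcos_le_sin:
  fixes t :: real assumes "0 \<le> t" "t \<le> pi/2" shows "t * cos t \<le> sin t"
proof (cases "t = 0")
  case True then show ?thesis by simp
next
  case False
  with assms have t0: "0 < t" by simp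
  have "\<exists>z. 0 < z \<and> z < t \<and> (sin t - t * cos t) - (sin 0 - 0 * cos 0) = (t - 0) * (z * sin z)"
    by (rule MVT2[OF t0]) (auto intro!: derivative_eq_intros)
  then obtain z where z: "0 < z" "z < t" and eq: "sin t - t * cos t = t * (z * sin z)" by auto
  have "0 \<le> sin z" using z assms by (intro sin_ge_zero) auto
  with z eq t0 show ?thesis by (smt (verit) mult_nonneg_nonneg)
qed

lemma tan_cubic:
  fixes t :: real assumes "0 \<le> t" "t \<le> pi/2" shows "t^3 * cos t / 3 \<le> sin t - t * cos t"
proof (cases "t = 0")
  case True then show ?thesis by simp
next
  case False
  with assms have t0: "0 < t" by simp
  let ?f = "\<lambda>u::real. 3 * sin u - 3 * u * cos u - u^3 * cos u"
  have "\<exists>z. 0 < z \<and> z < t \<and> ?f t - ?f 0 = (t - 0) * (3 * z * (sin z - z * cos z) + z^3 * sin z)"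
  proof (rule MVT2[OF t0])
    fix x :: real
    show "DERIV ?f x :> (3 * x * (sin x - x * cos x) + x^3 * sin x)"
      apply (auto intro!: derivative_eq_intros)
      apply (simp add: algebra_simps power2_eq_square)
      done
  qed
  then obtain z where z: "0 < z" "z < t" and eq: "?f t - ?f 0 = t * (3 * z * (sin z - z * cos z) + z^3 * sin z)" by auto
  have "0 \<le> sin z" using z assms by (intro sin_ge_zero) auto
  moreover have "z * cos z \<le> sin z" using z assms by (intro tcos_le_sin) auto
  ultimately have "0 \<le> 3 * z * (sin z - z * cos z) + z^3 * sin z" using z by simp
  with eq t0 have "0 \<le> ?f t" by simp
  then show ?thesis by simp
qed

lemma chi_bound:
  fixes t :: real assumes t: "0 < t" "t \<le> pi/2"
  shows "3 \<le> (sin t)^2 * (pi^2 / (2 * t^2) + 1)"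
proof (cases "t = pi/2")
  case True
  have "(pi/2)^2 = pi^2/4" by (simp add: power2_eq_square)
  then show ?thesis unfolding True by (simp add: field_simps)
next
  case False
  with t have tl: "t < pi/2" by simp
  let ?f = "\<lambda>u::real. (sin u)^2 * (pi^2 / (2 * u^2) + 1)"
  have "\<exists>z. t < z \<and> z < pi/2 \<and> ?f (pi/2) - ?f t = (pi/2 - t) * ((sin z / z^3) * (2 * z^3 * cos z - pi^2 * (sin z - z * cos z)))"
  proof (rule MVT2[OF tl])
    fix x :: real assume x: "t \<le> x" "x \<le> pi/2"
    then have "x \<noteq> 0" using t by simp
    then show "DERIV ?f x :> ((sin x / x^3) * (2 * x^3 * cos x - pi^2 * (sin x - x * cos x)))"
      apply (auto intro!: derivative_eq_intros)
      apply (simp add: field_simps eval_nat_numeral)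
      done
  qed
  then obtain z where z: "t < z" "z < pi/2" and eq: "?f (pi/2) - ?f t = (pi/2 - t) * ((sin z / z^3) * (2 * z^3 * cos z - pi^2 * (sin z - z * cos z)))" by auto
  have z0: "0 < z" using z t by simp
  have c: "z^3 * cos z / 3 \<le> sin z - z * cos z" using z0 z by (intro tan_cubic) auto
  have "0 \<le> cos z" using z0 z by (intro cos_ge_zero) auto
  then have "0 \<le> z^3 * cos z" using z0 by simp
  then have s0: "0 \<le> sin z - z * cos z" using c by linarith
  have "3*3 \<le> pi*pi" using pi_gt3 by (intro mult_mono) auto
  then have "6 \<le> pi^2" by (simp add: power2_eq_square)
  then have "6 * (sin z - z * cos z) \<le> pi^2 * (sin z - z * cos z)" using s0 by (rule mult_right_mono)
  moreover have aux: "\<And>D P Q::real. 6*D \<le> Q*D \<Longrightarrow> P/3 \<le> D \<Longrightarrow> 2*P - Q*D \<le> 0" by linarith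
  ultimately have "2 * (z^3 * cos z) - pi^2 * (sin z - z * cos z) \<le> 0" using c by blast
  then have neg: "2 * z^3 * cos z - pi^2 * (sin z - z * cos z) \<le> 0" by (simp add: mult.assoc)
  have "0 \<le> sin z / z^3" using z0 z by (simp add: sin_ge_zero)
  then have X: "(sin z / z^3) * (2 * z^3 * cos z - pi^2 * (sin z - z * cos z)) \<le> 0" using neg by (rule mult_nonneg_nonpos)
  have "(pi/2 - t) * ((sin z / z^3) * (2 * z^3 * cos z - pi^2 * (sin z - z * cos z))) \<le> 0"
    by (rule mult_nonneg_nonpos[OF _ X]) (use tl in simp)
  then have "?f (pi/2) - ?f t \<le> 0" by (subst eq)
  moreover have "pi^2 / (2 * (pi/2)^2) = 2" by (simp add: power2_eq_square)
  then have "?f (pi/2) = 3" by simp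
  ultimately show ?thesis by simp
qed

lemma algA:
  fixes A B p1 p2 q1 q2 K :: real
  assumes A: "0 \<le> A" and d: "0 \<le> p2 - p1" and KA: "K*A \<le> B"
    and q: "q2 - q1 \<le> K*(p2-p1)" and pq: "p1*q2 \<le> q1*p2"
  shows "(A+p1)*(B+q2) \<le> (B+q1)*(A+p2)"
proof -
  have 1: "A*(q2-q1) \<le> A*(K*(p2-p1))" using q A by (rule mult_left_mono)
  have 2: "(K*A)*(p2-p1) \<le> B*(p2-p1)" using KA d by (rule mult_right_mono)
  have "A*(q2-q1) \<le> B*(p2-p1)" using 1 2 by (simp add: algebra_simps)
  then show ?thesis using pq by (simp add: algebra_simps)
qed

lemma algB:
  fixes A B p1 p2 q1 q2 K C2 \<kappa> :: real
  assumes A: "0 \<le> A" and B: "0 \<le> B" and C2: "1 \<le> C2" and \<kappa>: "0 \<le> \<kappa>"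
    and hyp: "B - K*A \<le> \<kappa>*A*B"
    and F1: "q1*p2 \<le> C2*p1*q2" and F2': "K*p2 + q1 \<le> C2*q2 + K*C2*p1"
    and F2: "q1 \<le> q2" and F5: "\<kappa>*p2 \<le> C2 - 1"
    and p1: "0 \<le> p1" and p2: "0 \<le> p2" and q1: "0 \<le> q1"
  shows "(B+q1)*(A+p2) \<le> C2*(A+p1)*(B+q2)"
proof -
  have diff: "C2*(A+p1)*(B+q2) - (B+q1)*(A+p2) = A*B*(C2-1) + A*(C2*q2 - q1) + B*(C2*p1 - p2) + (C2*p1*q2 - q1*p2)"
    by (simp add: algebra_simps)
  have t1: "0 \<le> A*B*(C2-1)" using A B C2 by simp
  have t4: "0 \<le> C2*p1*q2 - q1*p2" using F1 by simp
  show ?thesis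
  proof (cases "p2 \<le> C2*p1")
    case True
    have "q2 \<le> C2*q2" using C2 F2 q1 by (simp add: mult_le_cancel_right1)
    then have "0 \<le> A*(C2*q2 - q1)" using A F2 by simp
    moreover have "0 \<le> B*(C2*p1 - p2)" using B True by simp
    ultimately show ?thesis using diff t1 t4 by linarith
  next
    case False
    then have e: "0 \<le> p2 - C2*p1" by simp
    have "B*(p2 - C2*p1) \<le> (K*A + \<kappa>*A*B)*(p2 - C2*p1)" using hyp e by (intro mult_right_mono) auto
    also have "\<dots> = A*(K*p2 - K*C2*p1) + (\<kappa>*A*B)*(p2 - C2*p1)" by (simp add: algebra_simps)
    also have "A*(K*p2 - K*C2*p1) \<le> A*(C2*q2 - q1)" using A F2' by (intro mult_left_mono) auto
    also have "(\<kappa>*A*B)*(p2 - C2*p1) \<le> (\<kappa>*A*B)*p2"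
      using A B \<kappa> C2 p1 by (intro mult_left_mono) auto
    also have "(\<kappa>*A*B)*p2 = (A*B)*(\<kappa>*p2)" by simp
    also have "\<dots> \<le> (A*B)*(C2-1)" using A B F5 by (intro mult_left_mono) auto
    finally have "B*(p2 - C2*p1) \<le> A*(C2*q2 - q1) + A*B*(C2-1)" by simp
    then show ?thesis using diff t4 by (simp add: algebra_simps)
  qed
qed



lemma one_minus_cos: "1 - cos (x::real) = 2 * (sin (x/2))^2"
  using cos_double_sin[of "x/2"] by simp

lemma cos_diff_cos_add: "cos ((x::real) - y) - cos (x + y) = 2 * sin x * sin y"
  by (simp add: cos_diff cos_add)

lemma sin_abs_sq: "(sin \<bar>x::real\<bar>)^2 = (sin x)^2"
  by (cases "x \<ge> 0") auto

lemma coreA: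
  fixes k A B a b :: real
  assumes k: "1 \<le> k" and A: "0 \<le> A" and kA: "k^2 * A \<le> B"
    and a: "0 < a" and b: "0 < b" and ka: "k*a < pi" and kb: "k*b < pi"
  shows "(A + (1 - cos (a-b))) * (B + (1 - cos (k*(a+b)))) \<le> (B + (1 - cos (k*(a-b)))) * (A + (1 - cos (a+b)))"
proof (rule algA[OF A _ kA])
  have aa: "a \<le> k*a" "b \<le> k*b" using a b k by (simp_all add: mult_le_cancel_right1)
  have "0 \<le> sin a" using a aa ka by (intro sin_ge_zero; linarith)
  have "0 \<le> sin b" using b aa kb by (intro sin_ge_zero; linarith)
  show "0 \<le> (1 - cos (a+b)) - (1 - cos (a-b))"
    using cos_diff_cos_add[of a b] \<open>0 \<le> sin a\<close> \<open>0 \<le> sin b\<close> by simp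
  have s1: "sin (k*a) \<le> k * sin a" using k a ka by (intro sin_le_k_sin) auto
  have s2: "sin (k*b) \<le> k * sin b" using k b kb by (intro sin_le_k_sin) auto
  have "0 \<le> sin (k*a)" "0 \<le> sin (k*b)" using a b k ka kb by (auto intro!: sin_ge_zero)
  then have "sin (k*a) * sin (k*b) \<le> (k * sin a) * (k * sin b)"
    using s1 s2 by (intro mult_mono) auto
  moreover have "(1 - cos (k*(a+b))) - (1 - cos (k*(a-b))) = 2 * sin (k*a) * sin (k*b)"
    using cos_diff_cos_add[of "k*a" "k*b"] by (simp add: algebra_simps)
  moreover have "(1 - cos (a+b)) - (1 - cos (a-b)) = 2 * sin a * sin b"
    using cos_diff_cos_add[of a b] by simp
  ultimately show "(1 - cos (k*(a+b))) - (1 - cos (k*(a-b))) \<le> k^2 * ((1 - cos (a+b)) - (1 - cos (a-b)))"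
    by (simp add: power2_eq_square algebra_simps)
  define h where "h = \<bar>a-b\<bar>/2"
  define m where "m = (a+b)/2"
  have h0: "0 \<le> h" and hm: "h \<le> m" using a b by (auto simp: h_def m_def)
  have km: "k*m < pi" using ka kb by (simp add: m_def algebra_simps)
  have key: "sin h * sin (k*m) \<le> sin (k*h) * sin m" using sin_ratio_mono[OF k h0 hm km] .
  have "0 \<le> m" using a b by (simp add: m_def)
  then have mk: "m \<le> k*m" using k by (metis mult_le_cancel_right1 mult.commute less_le_not_le)
  have hk: "k*h \<le> k*m" using hm k by simp
  have "0 \<le> sin h" "0 \<le> sin (k*m)" using h0 hm mk km k by (auto intro!: sin_ge_zero)
  then have sq: "(sin h * sin (k*m))^2 \<le> (sin (k*h) * sin m)^2"
    using key by (intro power_mono) auto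
  have e1: "1 - cos (a-b) = 2 * (sin h)^2"
    using one_minus_cos[of "a-b"] sin_abs_sq[of "(a-b)/2"] by (simp add: h_def)
  have kh: "k*h = \<bar>k*(a-b)/2\<bar>" using k by (simp add: h_def abs_mult)
  have "(sin (k*h))^2 = (sin (k*(a-b)/2))^2" unfolding kh by (rule sin_abs_sq)
  then have e2: "1 - cos (k*(a-b)) = 2 * (sin (k*h))^2"
    using one_minus_cos[of "k*(a-b)"] by simp
  have e3: "1 - cos (a+b) = 2 * (sin m)^2"
    using one_minus_cos[of "a+b"] by (simp add: m_def)
  have e4: "1 - cos (k*(a+b)) = 2 * (sin (k*m))^2"
    using one_minus_cos[of "k*(a+b)"] by (simp add: m_def)
  show "(1 - cos (a-b)) * (1 - cos (k*(a+b))) \<le> (1 - cos (k*(a-b))) * (1 - cos (a+b))"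
    unfolding e1 e2 e3 e4 using sq by (simp add: power_mult_distrib)
qed

lemma coreB:
  fixes k A B a b :: real
  assumes k: "1 \<le> k" and A: "0 \<le> A" and B: "0 \<le> B" and hyp: "B - k^2*A \<le> (k^2-1)/6 * A * B"
    and a: "0 < a" and b: "0 < b" and ab: "k*(a+b) \<le> pi"
  shows "(B + (1 - cos (k*(a-b)))) * (A + (1 - cos (a+b))) \<le> (k * sin (pi/(2*k)))^2 * (A + (1 - cos (a-b))) * (B + (1 - cos (k*(a+b))))"
proof -
  define t0 where "t0 = pi/(2*k)"
  define w0 where "w0 = sin t0"
  have k0: "0 < k" using k by simp
  have t0: "0 < t0" "t0 \<le> pi/2" using k by (auto simp: t0_def field_simps)
  have kt0: "k*t0 = pi/2" using k0 by (simp add: t0_def)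
  have "pi^2 / (2 * t0^2) = 2*k^2" using k0 by (simp add: t0_def power2_eq_square field_simps)
  then have L4: "3 \<le> w0^2 * (2*k^2 + 1)" using chi_bound[OF t0] by (simp add: w0_def)
  have w0sq: "w0^2 \<le> k^2 * w0^2" using k by (simp add: mult_le_cancel_right1 power2_eq_square) (metis mult_mono' mult_1 zero_le_one)
  have C2: "1 \<le> k^2 * w0^2" using L4 w0sq by (simp add: algebra_simps)
  define h where "h = \<bar>a-b\<bar>/2"
  define m where "m = (a+b)/2"
  have h0: "0 \<le> h" and hm: "h \<le> m" using a b by (auto simp: h_def m_def)
  have m0: "0 < m" using a b by (simp add: m_def)
  have kmt: "k*m \<le> pi/2" using ab by (simp add: m_def)
  have mt0: "m \<le> t0" using kmt k0 by (simp add: t0_def field_simps)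
  have mk: "m \<le> k*m" using m0 k by (metis mult_le_cancel_right1 mult.commute less_le_not_le)
  have khm: "k*h \<le> k*m" using hm k by simp
  have sh: "0 \<le> sin h" using h0 hm mk kmt pi_gt3 by (intro sin_ge_zero; linarith)
  have sm: "0 \<le> sin m" using m0 mk kmt pi_gt3 by (intro sin_ge_zero; linarith)
  have km0: "0 \<le> k*m" "0 \<le> k*h" using m0 h0 k by auto
  have skm: "0 \<le> sin (k*m)" using km0 kmt pi_gt3 by (intro sin_ge_zero; linarith)
  have skh: "0 \<le> sin (k*h)" using km0 khm kmt pi_gt3 by (intro sin_ge_zero; linarith)
  have F3: "sin m \<le> w0 * sin (k*m)"
    using sin_ratio_mono[OF k _ mt0, of] m0 kt0 by (simp add: w0_def mult.commute)
  have "k*h \<le> pi" using khm kmt pi_gt3 by linarith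
  then have F4: "sin (k*h) \<le> k * sin h" using k h0 by (intro sin_le_k_sin) auto
  have e1: "1 - cos (a-b) = 2 * (sin h)^2"
    using one_minus_cos[of "a-b"] sin_abs_sq[of "(a-b)/2"] by (simp add: h_def)
  have kh: "k*h = \<bar>k*(a-b)/2\<bar>" using k by (simp add: h_def abs_mult)
  have "(sin (k*h))^2 = (sin (k*(a-b)/2))^2" unfolding kh by (rule sin_abs_sq)
  then have e2: "1 - cos (k*(a-b)) = 2 * (sin (k*h))^2"
    using one_minus_cos[of "k*(a-b)"] by simp
  have e3: "1 - cos (a+b) = 2 * (sin m)^2"
    using one_minus_cos[of "a+b"] by (simp add: m_def)
  have e4: "1 - cos (k*(a+b)) = 2 * (sin (k*m))^2"
    using one_minus_cos[of "k*(a+b)"] by (simp add: m_def)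
  have w0nn: "0 \<le> w0" using t0 by (simp add: w0_def sin_ge_zero)
  have "(k * sin h) * (w0 * sin (k*m)) = (k*w0) * (sin h * sin (k*m))" by simp
  have f1: "sin (k*h) * sin m \<le> (k * sin h) * (w0 * sin (k*m))"
    using F3 F4 skh sm by (intro mult_mono) auto
  have F1: "(2 * (sin (k*h))^2) * (2 * (sin m)^2) \<le> (k^2 * w0^2) * (2 * (sin h)^2) * (2 * (sin (k*m))^2)"
  proof -
    have "(sin (k*h) * sin m)^2 \<le> ((k * sin h) * (w0 * sin (k*m)))^2"
      using f1 skh sm by (intro power_mono) auto
    then show ?thesis by (simp add: power_mult_distrib algebra_simps)
  qed
  have f2a: "(sin m)^2 \<le> w0^2 * (sin (k*m))^2"
    using power_mono[OF F3, of 2] sm by (simp add: power_mult_distrib)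
  have f2b: "(sin (k*h))^2 \<le> k^2 * (sin h)^2"
    using power_mono[OF F4, of 2] skh by (simp add: power_mult_distrib)
  have f2c0: "(k^2 * (sin h)^2) * 1 \<le> (k^2 * (sin h)^2) * (k^2 * w0^2)"
    by (rule mult_left_mono[OF C2]) simp
  have f2c: "k^2 * (sin h)^2 \<le> k^2 * (k^2 * w0^2) * (sin h)^2"
    using f2c0 by (simp add: algebra_simps)
  have F2': "k^2 * (2 * (sin m)^2) + 2 * (sin (k*h))^2 \<le> (k^2 * w0^2) * (2 * (sin (k*m))^2) + k^2 * (k^2 * w0^2) * (2 * (sin h)^2)"
  proof -
    have "k^2 * (sin m)^2 \<le> k^2 * (w0^2 * (sin (k*m))^2)" using f2a by (simp add: mult_left_mono)
    then show ?thesis using f2b f2c by (simp add: algebra_simps)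
  qed
  have F2: "1 - cos (k*(a-b)) \<le> 1 - cos (k*(a+b))"
  proof -
    have "cos (k*(a+b)) \<le> cos \<bar>k*(a-b)\<bar>"
      using ab a b k by (intro cos_monotone_0_pi_le) (auto simp: abs_mult abs_if algebra_simps)
    then show ?thesis by simp
  qed
  have f5a: "(sin m)^2 \<le> w0^2"
    using sin_monotone_2pi_le[of m t0] m0 mt0 t0 sm by (simp add: w0_def power_mono)
  have F5: "(k^2-1)/6 * (2 * (sin m)^2) \<le> k^2 * w0^2 - 1"
  proof -
    have "0 \<le> (k^2-1)/6" using C2 k by (simp add: power2_eq_square) (metis mult_mono' mult_1 zero_le_one)
    then have "(k^2-1)/6 * (2 * (sin m)^2) \<le> (k^2-1)/6 * (2 * w0^2)" using f5a by (intro mult_left_mono) auto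
    also have "\<dots> \<le> k^2 * w0^2 - 1"
    proof -
      have aux: "(X - Y)/6 * 2 \<le> X - 1" if "3 \<le> Y + 2*X" for X Y :: real using that by (simp add: field_simps)
      have "3 \<le> w0^2 + 2*(k^2*w0^2)" using L4 by (simp add: algebra_simps)
      from aux[OF this] show ?thesis by (simp add: algebra_simps)
    qed
    finally show ?thesis .
  qed
  have kap: "0 \<le> (k^2-1)/6" using k by (simp add: power2_eq_square) (metis mult_mono' mult_1 zero_le_one)
  show ?thesis
    unfolding e1 e2 e3 e4 power_mult_distrib t0_def[symmetric] w0_def[symmetric]
    by (rule algB[OF A B C2[unfolded power_mult_distrib] kap hyp F1 F2' F2[unfolded e2 e4] F5]) auto
qed

lemma cosh_abs_real: "cosh \<bar>x::real\<bar> = cosh x"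
  by (cases "x \<ge> 0") auto

lemma cosh_double_sinh: "cosh (2 * (y::real)) = 1 + 2 * (sinh y)^2"
  using cosh_double[of y] cosh_square_eq[of y] by simp

lemma aux_hyp: fixes S2 T2 K :: real
  assumes "T2 \<le> K*S2 + (K-1)/3*S2*T2"
  shows "(1 + 2*T2 - 1) - K*(1 + 2*S2 - 1) \<le> (K-1)/6 * (1 + 2*S2 - 1) * (1 + 2*T2 - 1)"
proof -
  define P where "P = (K-1)*S2*T2"
  have e: "(K-1)/6 * (1 + 2*S2 - 1) * (1 + 2*T2 - 1) = 2/3 * P" by (simp add: P_def field_simps)
  have h: "T2 \<le> K*S2 + 1/3 * P" using assms by (simp add: P_def)
  have "(1 + 2*T2 - 1) - K*(1 + 2*S2 - 1) = 2*T2 - 2*(K*S2)" by (simp add: algebra_simps)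
  then show ?thesis unfolding e using h by linarith
qed

lemma hyp_facts:
  fixes k l :: real
  assumes k: "1 \<le> k"
  shows "0 \<le> cosh l - 1" "0 \<le> cosh (k*l) - 1"
    "k^2 * (cosh l - 1) \<le> cosh (k*l) - 1"
    "(cosh (k*l) - 1) - k^2 * (cosh l - 1) \<le> (k^2-1)/6 * (cosh l - 1) * (cosh (k*l) - 1)"
proof -
  show "0 \<le> cosh l - 1" "0 \<le> cosh (k*l) - 1" using cosh_real_ge_1 by (auto simp: algebra_simps)
  define y where "y = \<bar>l\<bar>/2"
  have y0: "0 \<le> y" by (simp add: y_def)
  have cl: "cosh l = 1 + 2 * (sinh y)^2"
    using cosh_double_sinh[of y] by (simp add: y_def cosh_abs_real)
  have ckl: "cosh (k*l) = 1 + 2 * (sinh (k*y))^2"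
  proof -
    have "cosh (k*l) = cosh (\<bar>k*l\<bar>)" by (simp add: cosh_abs_real)
    also have "\<bar>k*l\<bar> = 2 * (k*y)" using k by (simp add: y_def abs_mult)
    finally show ?thesis using cosh_double_sinh[of "k*y"] by simp
  qed
  have kS: "k * sinh y \<le> sinh (k*y)" using sinh_k_ge[OF k y0] .
  have S0: "0 \<le> sinh y" using y0 by simp
  have "(k * sinh y)^2 \<le> (sinh (k*y))^2" using kS S0 k by (intro power_mono) auto
  then show "k^2 * (cosh l - 1) \<le> cosh (k*l) - 1" unfolding cl ckl by (simp add: power_mult_distrib)
  show "(cosh (k*l) - 1) - k^2 * (cosh l - 1) \<le> (k^2-1)/6 * (cosh l - 1) * (cosh (k*l) - 1)"
  proof (cases "y = 0")
    case True then show ?thesis unfolding cl ckl by simp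
  next
    case False
    with y0 have yp: "0 < y" by simp
    have Sp: "0 < sinh y" using yp by simp
    have Tp: "0 < sinh (k*y)" using yp k by simp
    have hk: "1 / (sinh y)^2 \<le> k^2 / (sinh (k*y))^2 + (k^2 - 1) / 3" using hyp_key[OF k yp] .
    have "(sinh (k*y))^2 \<le> k^2 * (sinh y)^2 + (k^2 - 1) / 3 * (sinh y)^2 * (sinh (k*y))^2"
    proof -
      define S where "S = sinh y"
      define T where "T = sinh (k*y)"
      have S: "S \<noteq> 0" and T: "T \<noteq> 0" using Sp Tp by (auto simp: S_def T_def)
      have "(1 / S^2) * (S^2 * T^2) \<le> (k^2 / T^2 + (k^2 - 1) / 3) * (S^2 * T^2)"
        using hk by (intro mult_right_mono) (auto simp: S_def T_def)
      moreover have "(1 / S^2) * (S^2 * T^2) = T^2" using S by simp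
      moreover have "(k^2 / T^2 + (k^2 - 1) / 3) * (S^2 * T^2) = k^2 * S^2 + (k^2 - 1) / 3 * S^2 * T^2"
        using T by (simp add: field_simps)
      ultimately show ?thesis by (simp add: S_def T_def)
    qed
    then show ?thesis unfolding cl ckl by (rule aux_hyp)
  qed
qed

lemma tanh_artanh:
  fixes q :: real assumes q: "\<bar>q\<bar> < 1"
  shows "tanh (artanh q) = q"
proof -
  define z where "z = (1+q)/(1-q)"
  have z0: "0 < z" using q by (auto simp: z_def)
  have "artanh q = ln (sqrt z)" using z0 by (simp add: artanh_def z_def ln_sqrt)
  moreover have "tanh (ln (sqrt z)) = (z - 1)/(z + 1)"
    using tanh_ln_real[of "sqrt z"] z0 by simp
  moreover have "(z - 1)/(z + 1) = q" using q by (simp add: z_def field_simps)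
  ultimately show ?thesis by simp
qed

lemma Arg_rcis: "0 < r \<Longrightarrow> -pi < a \<Longrightarrow> a \<le> pi \<Longrightarrow> Arg (rcis r a) = a"
  by (simp add: rcis_def Arg_cis)

lemma rcis_powr:
  fixes r a k :: real
  assumes r: "0 < r" and a: "-pi < a" "a \<le> pi"
  shows "rcis r a powr (of_real k) = rcis (r powr k) (k*a)"
proof -
  have nz: "rcis r a \<noteq> 0" using r by (simp add: rcis_def)
  have "Ln (rcis r a) = of_real (ln r) + \<i> * of_real a"
    using Ln_Arg[OF nz] Arg_rcis[OF r a] r by (simp add: rcis_def norm_mult)
  then have "rcis r a powr (of_real k) = exp (of_real k * (of_real (ln r) + \<i> * of_real a))"
    using nz by (simp add: powr_def)
  also have "\<dots> = exp (of_real (k * ln r) + \<i> * of_real (k*a))"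
    by (simp add: algebra_simps)
  also have "\<dots> = exp (of_real (k * ln r)) * exp (\<i> * of_real (k*a))"
    by (rule exp_add)
  also have "\<dots> = rcis (r powr k) (k*a)"
  proof -
    have "exp (of_real (k * ln r)) = complex_of_real (exp (k * ln r))" by (rule exp_of_real)
    then have "exp (of_real (k * ln r)) = complex_of_real (r powr k)" using r by (simp add: powr_def)
    then show ?thesis by (simp add: rcis_def cis_conv_exp)
  qed
  finally show ?thesis .
qed

lemma norm_rcis_diff_sq:
  "(cmod (rcis r a - rcis p b))^2 = r^2 + p^2 - 2*r*p*cos (a-b)"
proof -
  have "(cmod (rcis r a - rcis p b))^2 = (r * cos a - p * cos b)^2 + (r * sin a - p * sin b)^2"
    by (simp add: cmod_power2)
  also have "\<dots> = r^2 + p^2 - 2*r*p*cos (a-b)"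
    by (simp add: power2_diff power_mult_distrib sin_squared_eq algebra_simps cos_diff)
  finally show ?thesis .
qed

lemma cnj_rcis: "cnj (rcis p b) = rcis p (-b)"
  by (simp add: rcis_def cis_cnj)

lemma sector_iff:
  assumes th: "0 < \<theta>" "\<theta> < pi"
  shows "x \<in> sector \<theta> \<longleftrightarrow> 0 < Im x \<and> Im (x * cnj (cis \<theta>)) < 0"
proof (cases "x = 0")
  case True then show ?thesis by (simp add: sector_def Arg_zero)
next
  case False
  define r where "r = cmod x"
  define a where "a = Arg x"
  have r: "0 < r" using False by (simp add: r_def)
  have x: "x = rcis r a" by (simp add: r_def a_def rcis_cmod_Arg)
  have a: "-pi < a" "a \<le> pi" using Arg_bounded by (auto simp: a_def)
  have im1: "Im x = r * sin a" by (simp add: x)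
  have "x * cnj (cis \<theta>) = rcis r (a - \<theta>)" by (simp add: x rcis_def cis_cnj mult.assoc cis_mult)
  then have im2: "Im (x * cnj (cis \<theta>)) = r * sin (a - \<theta>)" by simp
  show ?thesis
  proof
    assume "x \<in> sector \<theta>"
    then have "0 < a" "a < \<theta>" by (auto simp: sector_def a_def)
    then have "0 < sin a" "0 < sin (\<theta> - a)" using th by (auto intro!: sin_gt_zero)
    then have "0 < sin a" "sin (a - \<theta>) < 0" using sin_minus[of "\<theta> - a"] by auto
    then have "0 < r * sin a" "r * sin (a - \<theta>) < 0" using r by (auto simp: mult_pos_neg)
    then show "0 < Im x \<and> Im (x * cnj (cis \<theta>)) < 0" unfolding im1 im2 by simp
  next
    assume h: "0 < Im x \<and> Im (x * cnj (cis \<theta>)) < 0"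
    then have "0 < a \<and> a < pi" using Arg_lt_pi[of x] by (simp add: a_def)
    moreover have "sin (a - \<theta>) < 0"
    proof -
      have "r * sin (a - \<theta>) < 0" using h unfolding im2 by simp
      then show ?thesis using r by (simp add: mult_less_0_iff)
    qed
    moreover have "\<not> (\<theta> \<le> a)"
    proof
      assume "\<theta> \<le> a"
      then have "0 \<le> sin (a - \<theta>)" using a th by (intro sin_ge_zero) auto
      then show False using \<open>sin (a - \<theta>) < 0\<close> by simp
    qed
    ultimately show "x \<in> sector \<theta>" by (auto simp: sector_def a_def)
  qed
qed

lemma open_sector:
  assumes th: "0 < \<theta>" "\<theta> < pi"
  shows "open (sector \<theta>)"
proof -
  have "sector \<theta> = {x. 0 < Im x} \<inter> {x. Im (x * cnj (cis \<theta>)) < 0}"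
    using sector_iff[OF th] by auto
  moreover have "open {x. 0 < Im x}" by (intro open_Collect_less continuous_intros)
  moreover have "open {x. Im (x * cnj (cis \<theta>)) < 0}" by (intro open_Collect_less continuous_intros)
  ultimately show ?thesis by auto
qed

lemma closure_sector_sub:
  assumes th: "0 < \<theta>" "\<theta> < pi"
  shows "closure (sector \<theta>) \<subseteq> {x. 0 \<le> Im x \<and> Im (x * cnj (cis \<theta>)) \<le> 0}"
proof (rule closure_minimal)
  show "sector \<theta> \<subseteq> {x. 0 \<le> Im x \<and> Im (x * cnj (cis \<theta>)) \<le> 0}"
    using sector_iff[OF th] by auto
  have "closed {x. 0 \<le> Im x}" by (intro closed_Collect_le continuous_intros)
  moreover have "closed {x. Im (x * cnj (cis \<theta>)) \<le> 0}" by (intro closed_Collect_le continuous_intros)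
  ultimately have "closed ({x. 0 \<le> Im x} \<inter> {x. Im (x * cnj (cis \<theta>)) \<le> 0})" by auto
  then show "closed {x. 0 \<le> Im x \<and> Im (x * cnj (cis \<theta>)) \<le> 0}"
    by (simp add: Collect_conj_eq)
qed

lemma in_closure_sector:
  assumes th: "0 < \<theta>" "\<theta> < pi" and z: "0 \<le> Im z" "Im (z * cnj (cis \<theta>)) \<le> 0"
  shows "z \<in> closure (sector \<theta>)"
  unfolding closure_approachable
proof (intro allI impI)
  fix e :: real assume e: "0 < e"
  define y where "y = z + of_real (e/2) * cis (\<theta>/2)"
  have s: "0 < sin (\<theta>/2)" using th by (intro sin_gt_zero) auto
  have es: "0 < e/2 * sin (\<theta>/2)" using e s by simp
  have "Im y = Im z + e/2 * sin (\<theta>/2)" by (simp add: y_def)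
  then have "0 < Im y" using z es by linarith
  moreover have "Im (y * cnj (cis \<theta>)) = Im (z * cnj (cis \<theta>)) - e/2 * sin (\<theta>/2)"
  proof -
    have "cis (\<theta>/2) * cnj (cis \<theta>) = cis (-(\<theta>/2))" by (simp add: cis_cnj cis_mult)
    then have "Im (of_real (e/2) * cis (\<theta>/2) * cnj (cis \<theta>)) = - (e/2 * sin (\<theta>/2))"
      by (simp add: mult.assoc)
    then show ?thesis by (simp add: y_def distrib_right)
  qed
  then have "Im (y * cnj (cis \<theta>)) < 0" using z es by linarith
  ultimately have "y \<in> sector \<theta>" using sector_iff[OF th] by auto
  moreover have "dist y z < e" using e by (simp add: y_def dist_norm norm_mult)
  ultimately show "\<exists>y\<in>sector \<theta>. dist y z < e" by blast
qed

lemma frontier_sector_cases: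
  assumes th: "0 < \<theta>" "\<theta> < pi" and z: "z \<in> frontier (sector \<theta>)"
  shows "Im z = 0 \<or> Im (z * cnj (cis \<theta>)) = 0"
proof -
  have "z \<in> closure (sector \<theta>)" "z \<notin> interior (sector \<theta>)" using z by (auto simp: frontier_def)
  then have "0 \<le> Im z" "Im (z * cnj (cis \<theta>)) \<le> 0" "z \<notin> sector \<theta>"
    using closure_sector_sub[OF th] interior_open[OF open_sector[OF th]] by auto
  then show ?thesis using sector_iff[OF th] by auto
qed

lemma real_in_frontier:
  assumes th: "0 < \<theta>" "\<theta> < pi" and t: "0 \<le> t"
  shows "complex_of_real t \<in> frontier (sector \<theta>)"
proof -
  have "Im (complex_of_real t * cnj (cis \<theta>)) = - t * sin \<theta>" by simp
  moreover have "0 \<le> sin \<theta>" using th by (intro sin_ge_zero) auto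
  ultimately have "Im (complex_of_real t * cnj (cis \<theta>)) \<le> 0" using t by simp
  then have "complex_of_real t \<in> closure (sector \<theta>)" using th by (intro in_closure_sector) auto
  moreover have "complex_of_real t \<notin> interior (sector \<theta>)"
    using interior_open[OF open_sector[OF th]] sector_iff[OF th] by simp
  ultimately show ?thesis by (simp add: frontier_def)
qed

lemma ray2_in_frontier:
  assumes th: "0 < \<theta>" "\<theta> < pi" and t: "0 \<le> t"
  shows "complex_of_real t * cis \<theta> \<in> frontier (sector \<theta>)"
proof -
  have c: "cis \<theta> * cnj (cis \<theta>) = 1" by (simp add: cis_cnj cis_mult)
  have im0: "Im (complex_of_real t * cis \<theta> * cnj (cis \<theta>)) = 0" by (simp add: mult.assoc c)
  have "0 \<le> Im (complex_of_real t * cis \<theta>)" using th t by (simp add: sin_ge_zero)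
  then have "complex_of_real t * cis \<theta> \<in> closure (sector \<theta>)" using th im0 by (intro in_closure_sector) auto
  moreover have "complex_of_real t * cis \<theta> \<notin> interior (sector \<theta>)"
    using interior_open[OF open_sector[OF th]] sector_iff[OF th] im0 by simp
  ultimately show ?thesis by (simp add: frontier_def)
qed

definition Dinf :: "real \<Rightarrow> complex \<Rightarrow> complex \<Rightarrow> real" where
  "Dinf \<theta> x y = (INF z\<in>frontier (sector \<theta>). cmod (x - z) + cmod (z - y))"

lemma s_metric_Dinf: "s_metric (sector \<theta>) x y = cmod (x - y) / Dinf \<theta> x y"
  by (simp add: s_metric_def Dinf_def)

lemma Dinf_upper:
  assumes "z \<in> frontier (sector \<theta>)"
  shows "Dinf \<theta> x y \<le> cmod (x - z) + cmod (z - y)"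
  unfolding Dinf_def
proof (rule cINF_lower[OF _ assms])
  show "bdd_below ((\<lambda>z. cmod (x - z) + cmod (z - y)) ` frontier (sector \<theta>))"
    by (rule bdd_belowI[of _ 0]) auto
qed

lemma refl2_norm:
  assumes "Im (z * cnj (cis \<theta>)) = 0"
  shows "cmod (z - y) = cmod (z - cis \<theta> * cis \<theta> * cnj y)"
proof -
  define w where "w = cis \<theta>"
  have w: "w * cnj w = 1" by (simp add: w_def cis_cnj cis_mult)
  have nw: "cmod w = 1" "cmod (cnj w) = 1" by (simp_all add: w_def)
  have r: "cnj (cnj w * z) = cnj w * z" using assms by (simp add: complex_eq_iff mult.commute w_def)
  have "w * (cnj w * z - w * cnj y) = (w * cnj w) * z - w * w * cnj y" by (simp add: algebra_simps)
  then have e: "w * (cnj w * z - w * cnj y) = z - w * w * cnj y" unfolding w by simp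
  have "cmod (z - w * w * cnj y) = cmod (cnj w * z - w * cnj y)"
    unfolding e[symmetric] norm_mult nw by simp
  also have "\<dots> = cmod (cnj (cnj w * z - w * cnj y))" by (simp only: complex_mod_cnj)
  also have "cnj (cnj w * z - w * cnj y) = cnj w * (z - y)"
  proof -
    have "cnj (cnj w * z - w * cnj y) = cnj (cnj w * z) - cnj w * y" by simp
    then show ?thesis unfolding r by (simp add: algebra_simps)
  qed
  also have "cmod (cnj w * (z - y)) = cmod (z - y)" unfolding norm_mult nw by simp
  finally show ?thesis by (simp add: w_def)
qed

lemma Dinf_lower:
  assumes th: "0 < \<theta>" "\<theta> < pi"
  shows "min (cmod (x - cnj y)) (cmod (x - cis \<theta> * cis \<theta> * cnj y)) \<le> Dinf \<theta> x y"
  unfolding Dinf_def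
proof (rule cINF_greatest)
  show "frontier (sector \<theta>) \<noteq> {}" using real_in_frontier[OF th, of 0] by auto
  fix z assume z: "z \<in> frontier (sector \<theta>)"
  show "min (cmod (x - cnj y)) (cmod (x - cis \<theta> * cis \<theta> * cnj y)) \<le> cmod (x - z) + cmod (z - y)"
  proof (cases "Im z = 0")
    case True
    have "cmod (z - y) = cmod (cnj (z - y))" by (simp only: complex_mod_cnj)
    also have "cnj (z - y) = z - cnj y" using True by (simp add: complex_eq_iff)
    finally have "cmod (z - y) = cmod (z - cnj y)" .
    moreover have "cmod (x - cnj y) \<le> cmod (x - z) + cmod (z - cnj y)"
      using norm_triangle_ineq[of "x - z" "z - cnj y"] by simp
    ultimately show ?thesis by simp
  next
    case False
    then have "Im (z * cnj (cis \<theta>)) = 0" using frontier_sector_cases[OF th z] by simp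
    then have "cmod (z - y) = cmod (z - cis \<theta> * cis \<theta> * cnj y)"
      by (rule refl2_norm)
    moreover have "cmod (x - cis \<theta> * cis \<theta> * cnj y) \<le> cmod (x - z) + cmod (z - cis \<theta> * cis \<theta> * cnj y)"
      using norm_triangle_ineq[of "x - z" "z - cis \<theta> * cis \<theta> * cnj y"] by simp
    ultimately show ?thesis by simp
  qed
qed

lemma crossing:
  assumes x: "0 < Im x" and y: "0 < Im y" and c: "0 \<le> Re x * Im y + Re y * Im x"
  shows "\<exists>t\<ge>0. cmod (x - complex_of_real t) + cmod (complex_of_real t - y) = cmod (x - cnj y)"
proof -
  define s where "s = Im x + Im y"
  have s: "0 < s" using x y by (simp add: s_def)
  define t where "t = (Re x * Im y + Re y * Im x) / s"
  have t: "0 \<le> t" using c s by (simp add: t_def)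
  have e1: "x - complex_of_real t = complex_of_real (Im x / s) * (x - cnj y)"
    using s by (simp add: complex_eq_iff t_def s_def field_simps)
  have e2: "complex_of_real t - cnj y = complex_of_real (Im y / s) * (x - cnj y)"
    using s by (simp add: complex_eq_iff t_def s_def field_simps)
  have "cmod (complex_of_real t - y) = cmod (cnj (complex_of_real t - y))" by (simp only: complex_mod_cnj)
  then have e3: "cmod (complex_of_real t - y) = cmod (complex_of_real t - cnj y)" by simp
  have n1: "cmod (complex_of_real (Im x / s) * (x - cnj y)) = Im x / s * cmod (x - cnj y)"
    using x s by (simp only: norm_mult norm_of_real) simp
  have n2: "cmod (complex_of_real (Im y / s) * (x - cnj y)) = Im y / s * cmod (x - cnj y)"
    using y s by (simp only: norm_mult norm_of_real) simp
  have "cmod (x - complex_of_real t) + cmod (complex_of_real t - y) = (Im x / s + Im y / s) * cmod (x - cnj y)"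
    unfolding e3 e1 e2 n1 n2 by (simp add: distrib_right)
  also have "Im x / s + Im y / s = 1"
  proof -
    have "Im x / s + Im y / s = (Im x + Im y) / s" by (rule add_divide_distrib[symmetric])
    then have "Im x / s + Im y / s = s / s" by (simp only: s_def)
    then show ?thesis using s by simp
  qed
  finally show ?thesis using t by auto
qed

lemma expand_polar:
  fixes r p c :: real assumes r: "0 < r" and p: "0 < p"
  shows "r^2 + p^2 - 2*r*p*cos c = 2*r*p*((cosh (ln (r/p)) - 1) + (1 - cos c))"
proof -
  have "cosh (ln (r/p)) = (r/p + inverse (r/p))/2" using r p by (simp add: cosh_ln_real)
  then show ?thesis using r p by (simp add: field_simps power2_eq_square)
qed

lemma ln_powr_ratio:
  fixes r p k :: real assumes r: "0 < r" and p: "0 < p"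
  shows "ln (r powr k / p powr k) = k * ln (r/p)"
  using r p by (simp add: ln_div algebra_simps)

lemma polarA:
  fixes k r p a b :: real
  assumes k: "1 \<le> k" and r: "0 < r" and p: "0 < p" and a: "0 < a" and b: "0 < b"
    and ka: "k*a < pi" and kb: "k*b < pi"
  defines "R \<equiv> r powr k" and "P \<equiv> p powr k"
  shows "(r^2+p^2-2*r*p*cos (a-b)) * (R^2+P^2-2*R*P*cos (k*(a+b))) \<le> (R^2+P^2-2*R*P*cos (k*(a-b))) * (r^2+p^2-2*r*p*cos (a+b))"
proof -
  define l where "l = ln (r/p)"
  have R: "0 < R" and P: "0 < P" using r p by (simp_all add: R_def P_def)
  have lRP: "ln (R/P) = k * l" using ln_powr_ratio[OF r p] by (simp add: R_def P_def l_def)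
  note hf = hyp_facts[OF k, of l]
  have core: "(cosh l - 1 + (1 - cos (a-b))) * (cosh (k*l) - 1 + (1 - cos (k*(a+b)))) \<le> (cosh (k*l) - 1 + (1 - cos (k*(a-b)))) * (cosh l - 1 + (1 - cos (a+b)))"
    by (rule coreA[OF k hf(1) hf(3) a b ka kb])
  have pos: "0 \<le> (2*r*p) * (2*R*P)" using r p R P by simp
  have "(2*r*p) * (2*R*P) * ((cosh l - 1 + (1 - cos (a-b))) * (cosh (k*l) - 1 + (1 - cos (k*(a+b))))) \<le> (2*r*p) * (2*R*P) * ((cosh (k*l) - 1 + (1 - cos (k*(a-b)))) * (cosh l - 1 + (1 - cos (a+b))))"
    using core pos by (rule mult_left_mono)
  then show ?thesis
    unfolding expand_polar[OF r p] expand_polar[OF R P] lRP l_def[symmetric] by (simp add: algebra_simps)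
qed

lemma polarB:
  fixes k r p a b :: real
  assumes k: "1 \<le> k" and r: "0 < r" and p: "0 < p" and a: "0 < a" and b: "0 < b"
    and ab: "k*(a+b) \<le> pi"
  defines "R \<equiv> r powr k" and "P \<equiv> p powr k"
  shows "(R^2+P^2-2*R*P*cos (k*(a-b))) * (r^2+p^2-2*r*p*cos (a+b)) \<le> (k * sin (pi/(2*k)))^2 * (r^2+p^2-2*r*p*cos (a-b)) * (R^2+P^2-2*R*P*cos (k*(a+b)))"
proof -
  define l where "l = ln (r/p)"
  have R: "0 < R" and P: "0 < P" using r p by (simp_all add: R_def P_def)
  have lRP: "ln (R/P) = k * l" using ln_powr_ratio[OF r p] by (simp add: R_def P_def l_def)
  note hf = hyp_facts[OF k, of l]
  have core: "(cosh (k*l) - 1 + (1 - cos (k*(a-b)))) * (cosh l - 1 + (1 - cos (a+b))) \<le> (k * sin (pi/(2*k)))^2 * (cosh l - 1 + (1 - cos (a-b))) * (cosh (k*l) - 1 + (1 - cos (k*(a+b))))"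
    by (rule coreB[OF k hf(1) hf(2) hf(4) a b ab])
  have pos: "0 \<le> (2*r*p) * (2*R*P)" using r p R P by simp
  have "(2*r*p) * (2*R*P) * ((cosh (k*l) - 1 + (1 - cos (k*(a-b)))) * (cosh l - 1 + (1 - cos (a+b)))) \<le> (2*r*p) * (2*R*P) * ((k * sin (pi/(2*k)))^2 * (cosh l - 1 + (1 - cos (a-b))) * (cosh (k*l) - 1 + (1 - cos (k*(a+b)))))"
    using core pos by (rule mult_left_mono)
  then show ?thesis
    unfolding expand_polar[OF r p] expand_polar[OF R P] lRP l_def[symmetric] by (simp add: algebra_simps)
qed

lemma sector_rcis:
  assumes "x \<in> sector \<theta>"
  shows "0 < cmod x" "0 < Arg x" "Arg x < \<theta>" "x = rcis (cmod x) (Arg x)"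
proof -
  show "0 < Arg x" "Arg x < \<theta>" using assms by (auto simp: sector_def)
  then have "x \<noteq> 0" by (auto simp: Arg_zero)
  then show "0 < cmod x" by simp
  show "x = rcis (cmod x) (Arg x)" by (simp add: rcis_cmod_Arg)
qed

lemma rcis_sector:
  assumes "0 < r" "0 < a" "a < \<theta>" "\<theta> \<le> pi"
  shows "rcis r a \<in> sector \<theta>"
  using assms Arg_rcis[of r a] by (simp add: sector_def)

lemma polar_pos:
  fixes r p c :: real
  assumes r: "0 < r" and p: "0 < p" and c: "0 < \<bar>c\<bar>" "\<bar>c\<bar> < 2*pi"
  shows "0 < r^2 + p^2 - 2*r*p*cos c"
proof -
  have "0 < sin (\<bar>c\<bar>/2)" using c by (intro sin_gt_zero) auto
  then have "0 < (sin (\<bar>c\<bar>/2))^2" by simp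
  moreover have "cos \<bar>c\<bar> = cos c" by (cases "c \<ge> 0") auto
  moreover have "1 - cos \<bar>c\<bar> = 2 * (sin (\<bar>c\<bar>/2))^2" by (rule one_minus_cos)
  ultimately have "0 < 1 - cos c" by simp
  then have "0 < 2*r*p*(1 - cos c)" using r p by simp
  moreover have "r^2 + p^2 - 2*r*p*cos c = (r-p)^2 + 2*r*p*(1 - cos c)" by (simp add: power2_diff algebra_simps)
  ultimately show ?thesis by (smt (verit) zero_le_power2)
qed

lemma ratio_le:
  fixes d1 d2 e1 e2 :: real
  assumes "0 \<le> d1" "0 < d2" "0 \<le> e1" "0 < e2" "d1 * e2 \<le> e1 * d2"
  shows "sqrt d1 / sqrt d2 \<le> sqrt e1 / sqrt e2"
proof -
  have "sqrt d1 * sqrt e2 \<le> sqrt e1 * sqrt d2"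
    using assms by (simp add: real_sqrt_mult[symmetric])
  moreover have "0 < sqrt d2" "0 < sqrt e2" using assms by auto
  ultimately show ?thesis by (simp add: field_simps)
qed

lemma ratio_le2:
  fixes d1 d2 e1 e2 C :: real
  assumes "0 \<le> d1" "0 < d2" "0 \<le> e1" "0 < e2" "0 \<le> C" "e1 * d2 \<le> C^2 * d1 * e2"
  shows "sqrt e1 / sqrt e2 \<le> C * sqrt d1 / sqrt d2"
proof -
  have l: "sqrt (e1 * d2) \<le> sqrt (C^2 * d1 * e2)" using assms(6) by (rule real_sqrt_le_mono)
  have eq: "sqrt (C^2 * d1 * e2) = C * sqrt d1 * sqrt e2" using assms(5) by (simp add: real_sqrt_mult)
  have "sqrt e1 * sqrt d2 \<le> C * sqrt d1 * sqrt e2" using l unfolding eq by (simp add: real_sqrt_mult)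
  moreover have "0 < sqrt d2" "0 < sqrt e2" using assms by auto
  ultimately show ?thesis by (simp add: field_simps)
qed

lemma cmod_sqrt: "cmod z = sqrt ((cmod z)^2)"
  by simp

lemma th_formula:
  assumes th: "0 < \<theta>" "\<theta> < pi" and r: "0 < r" and p: "0 < p"
    and a: "0 < a" "a < \<theta>" and b: "0 < b" "b < \<theta>"
  defines "k \<equiv> pi/\<theta>"
  defines "E1 \<equiv> (r powr k)^2 + (p powr k)^2 - 2*(r powr k)*(p powr k)*cos (k*(a-b))"
    and "E2 \<equiv> (r powr k)^2 + (p powr k)^2 - 2*(r powr k)*(p powr k)*cos (k*(a+b))"
  shows "tanh (rho_S \<theta> (rcis r a) (rcis p b) / 2) = sqrt E1 / sqrt E2" "0 \<le> E1" "0 < E2" "E1 < E2"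
proof -
  have k0: "0 < k" using th by (simp add: k_def)
  have ka: "0 < k*a" "k*a < pi" using a th k0 by (auto simp: k_def field_simps)
  have kb: "0 < k*b" "k*b < pi" using b th k0 by (auto simp: k_def field_simps)
  define u where "u = rcis (r powr k) (k*a)"
  define v where "v = rcis (p powr k) (k*b)"
  have pu: "rcis r a powr of_real (pi/\<theta>) = u"
    unfolding u_def k_def using r a th by (intro rcis_powr) auto
  have pv: "rcis p b powr of_real (pi/\<theta>) = v"
    unfolding v_def k_def using p b th by (intro rcis_powr) auto
  have n1: "(cmod (u - v))^2 = E1" unfolding u_def v_def E1_def norm_rcis_diff_sq by (simp add: algebra_simps)
  have n2: "(cmod (u - cnj v))^2 = E2" unfolding u_def v_def E2_def cnj_rcis norm_rcis_diff_sq by (simp add: algebra_simps)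
  have sa: "0 < sin (k*a)" and sb: "0 < sin (k*b)" using ka kb by (auto intro!: sin_gt_zero)
  then have sp: "0 < 2 * sin (k*a) * sin (k*b)" by simp
  have cd: "cos (k*(a-b)) - cos (k*(a+b)) = 2 * sin (k*a) * sin (k*b)"
    using cos_diff_cos_add[of "k*a" "k*b"] by (simp add: algebra_simps)
  have RP: "0 < r powr k * p powr k" using r p by simp
  have "E2 - E1 = 2*(r powr k)*(p powr k) * (cos (k*(a-b)) - cos (k*(a+b)))"
    by (simp add: E1_def E2_def algebra_simps)
  also have "\<dots> > 0" unfolding cd using r p sa sb by (intro mult_pos_pos) auto
  finally show lt: "E1 < E2" by simp
  show E1: "0 \<le> E1" using n1[symmetric] by simp
  then show E2: "0 < E2" using lt by simp
  define q where "q = cmod (u - v) / cmod (u - cnj v)"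
  have q: "q = sqrt E1 / sqrt E2" unfolding q_def n1[symmetric] n2[symmetric] by simp
  have "sqrt E1 < sqrt E2" using lt E1 by simp
  then have "\<bar>q\<bar> < 1" unfolding q using E1 E2 by simp
  have "rho_S \<theta> (rcis r a) (rcis p b) = 2 * artanh q"
    unfolding rho_S_def rho_H_def pu pv q_def by simp
  then have "tanh (rho_S \<theta> (rcis r a) (rcis p b) / 2) = q"
    using tanh_artanh[OF \<open>\<bar>q\<bar> < 1\<close>] by simp
  then show "tanh (rho_S \<theta> (rcis r a) (rcis p b) / 2) = sqrt E1 / sqrt E2" using q by simp
qed

lemma refl_dist:
  "cmod (rcis r a - complex_of_real t * cis \<theta>) = cmod (rcis r (\<theta> - a) - complex_of_real t)"
proof -
  have "rcis r a - complex_of_real t * cis \<theta> = cis \<theta> * (rcis r (a - \<theta>) - complex_of_real t)"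
    by (simp add: rcis_def algebra_simps cis_mult)
  then have "cmod (rcis r a - complex_of_real t * cis \<theta>) = cmod (rcis r (a - \<theta>) - complex_of_real t)"
    by (simp add: norm_mult)
  also have "rcis r (a - \<theta>) - complex_of_real t = cnj (rcis r (\<theta> - a) - complex_of_real t)"
    by (simp add: cnj_rcis)
  also have "cmod \<dots> = cmod (rcis r (\<theta> - a) - complex_of_real t)" by (rule complex_mod_cnj)
  finally show ?thesis .
qed

lemma crossing_polar:
  assumes r: "0 < r" and p: "0 < p" and a: "0 < a" and b: "0 < b" and ab: "a + b < pi"
  shows "\<exists>t\<ge>0. cmod (rcis r a - complex_of_real t) + cmod (complex_of_real t - rcis p b) = cmod (rcis r a - cnj (rcis p b))"
proof (rule crossing)
  have "a < pi" "b < pi" using a b ab by auto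
  then have "0 < sin a" "0 < sin b" using a b by (auto intro!: sin_gt_zero)
  then show "0 < Im (rcis r a)" "0 < Im (rcis p b)" using r p by auto
  have "Re (rcis r a) * Im (rcis p b) + Re (rcis p b) * Im (rcis r a) = r * p * sin (a + b)"
    by (simp add: sin_add algebra_simps)
  moreover have "0 \<le> sin (a+b)" using a b ab by (intro sin_ge_zero) auto
  ultimately show "0 \<le> Re (rcis r a) * Im (rcis p b) + Re (rcis p b) * Im (rcis r a)"
    using r p by simp
qed

lemma part1:
  assumes th: "0 < \<theta>" "\<theta> < pi" and x: "x \<in> sector \<theta>" and y: "y \<in> sector \<theta>"
  shows "s_metric (sector \<theta>) x y \<le> tanh (rho_S \<theta> x y / 2) \<and>
         tanh (rho_S \<theta> x y / 2) \<le> (pi / \<theta>) * sin (\<theta> / 2) * s_metric (sector \<theta>) x y"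
proof -
  define r where "r = cmod x"
  define a where "a = Arg x"
  define p where "p = cmod y"
  define b where "b = Arg y"
  have r: "0 < r" and a: "0 < a" "a < \<theta>" and xr: "x = rcis r a"
    using sector_rcis[OF x] by (auto simp: r_def a_def)
  have p: "0 < p" and b: "0 < b" "b < \<theta>" and yr: "y = rcis p b"
    using sector_rcis[OF y] by (auto simp: p_def b_def)
  define k where "k = pi/\<theta>"
  have k1: "1 \<le> k" using th by (simp add: k_def field_simps)
  have kth: "k * \<theta> = pi" using th by (simp add: k_def)
  define E1 where "E1 = (r powr k)^2 + (p powr k)^2 - 2*(r powr k)*(p powr k)*cos (k*(a-b))"
  define E2 where "E2 = (r powr k)^2 + (p powr k)^2 - 2*(r powr k)*(p powr k)*cos (k*(a+b))"
  have thf: "tanh (rho_S \<theta> x y / 2) = sqrt E1 / sqrt E2" "0 \<le> E1" "0 < E2"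
    using th_formula[OF th r p a b] unfolding xr yr E1_def E2_def k_def by auto
  define d1 where "d1 = r^2 + p^2 - 2*r*p*cos (a-b)"
  define d2 where "d2 = r^2 + p^2 - 2*r*p*cos (a+b)"
  define d3 where "d3 = r^2 + p^2 - 2*r*p*cos ((\<theta>-a)+(\<theta>-b))"
  have nd1: "cmod (x - y) = sqrt d1"
    by (subst cmod_sqrt) (simp add: xr yr norm_rcis_diff_sq d1_def)
  have nd2: "cmod (x - cnj y) = sqrt d2"
    by (subst cmod_sqrt) (simp add: xr yr cnj_rcis norm_rcis_diff_sq d2_def)
  have "cis \<theta> * cis \<theta> * cnj y = complex_of_real p * (cis \<theta> * cis \<theta> * cis (-b))"
    by (simp add: yr cnj_rcis rcis_def cis_cnj)
  also have "cis \<theta> * cis \<theta> * cis (-b) = cis (2*\<theta> - b)" by (simp add: cis_mult)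
  finally have "cis \<theta> * cis \<theta> * cnj y = rcis p (2*\<theta> - b)" by (simp add: rcis_def)
  moreover have "cos (a - (2*\<theta> - b)) = cos ((\<theta>-a)+(\<theta>-b))"
    using cos_minus[of "(\<theta>-a)+(\<theta>-b)"] by (simp add: algebra_simps)
  ultimately have nd3: "cmod (x - cis \<theta> * cis \<theta> * cnj y) = sqrt d3"
    by (subst cmod_sqrt) (simp add: xr norm_rcis_diff_sq d3_def)
  have d1: "0 \<le> d1" using nd1 by (metis norm_ge_zero real_sqrt_ge_0_iff real_sqrt_eq_zero_cancel_iff le_less)
  have d2: "0 < d2" unfolding d2_def using r p a b th by (intro polar_pos) auto
  have d3: "0 < d3" unfolding d3_def using r p a b th by (intro polar_pos) auto
  define M where "M = min (sqrt d2) (sqrt d3)"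
  have M: "0 < M" using d2 d3 by (simp add: M_def)
  have DM: "M \<le> Dinf \<theta> x y" using Dinf_lower[OF th, of x y] unfolding nd2 nd3 M_def .
  have D0: "0 < Dinf \<theta> x y" using M DM by simp
  have sdef: "s_metric (sector \<theta>) x y = sqrt d1 / Dinf \<theta> x y" by (simp add: s_metric_Dinf nd1)
  have ka: "k*a < pi" "k*b < pi" using a b kth k1 by (auto intro!: mult_strict_left_mono[of _ \<theta> k, simplified kth])
  have ka': "k*(\<theta>-a) < pi" "k*(\<theta>-b) < pi" using a b kth k1 th
    by (auto intro!: mult_strict_left_mono[of _ \<theta> k, simplified kth])
  have A1: "d1 * E2 \<le> E1 * d2"
    using polarA[OF k1 r p a(1) b(1) ka] unfolding d1_def d2_def E1_def E2_def .
  have cE2: "cos (k*((\<theta>-a)+(\<theta>-b))) = cos (k*(a+b))"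
  proof -
    have "k*((\<theta>-a)+(\<theta>-b)) = 2*pi - k*(a+b)" using kth by (simp add: algebra_simps)
    then show ?thesis by (simp add: cos_diff)
  qed
  have cE1: "cos (k*((\<theta>-a)-(\<theta>-b))) = cos (k*(a-b))"
    using cos_minus[of "k*(a-b)"] by (simp add: algebra_simps)
  have cd1: "cos ((\<theta>-a)-(\<theta>-b)) = cos (a-b)"
    using cos_minus[of "a-b"] by (simp add: algebra_simps)
  have A2: "d1 * E2 \<le> E1 * d3"
    using polarA[OF k1 r p _ _ ka'] a b unfolding d1_def d3_def E1_def E2_def cE2 cE1 cd1 by simp
  define C where "C = k * sin (pi/(2*k))"
  have Cth: "C = (pi/\<theta>) * sin (\<theta>/2)" using th by (simp add: C_def k_def)
  have C0: "0 \<le> C" unfolding Cth using th by (intro mult_nonneg_nonneg sin_ge_zero) auto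
  have part_i: "s_metric (sector \<theta>) x y \<le> tanh (rho_S \<theta> x y / 2)"
  proof -
    have "sqrt d1 / Dinf \<theta> x y \<le> sqrt d1 / M" using DM M d1 by (intro divide_left_mono) auto
    moreover have "sqrt d1 / M \<le> sqrt E1 / sqrt E2"
    proof (cases "sqrt d2 \<le> sqrt d3")
      case True
      then have "M = sqrt d2" by (simp add: M_def)
      then show ?thesis using ratio_le[OF d1 d2 thf(2) thf(3) A1] by simp
    next
      case False
      then have "M = sqrt d3" by (simp add: M_def)
      then show ?thesis using ratio_le[OF d1 d3 thf(2) thf(3) A2] by simp
    qed
    ultimately show ?thesis unfolding sdef thf(1) by simp
  qed
  have part_ii: "tanh (rho_S \<theta> x y / 2) \<le> C * s_metric (sector \<theta>) x y"
  proof (cases "a + b \<le> \<theta>")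
    case True
    have "k*(a+b) \<le> k*\<theta>" using True k1 by (intro mult_left_mono) auto
    then have kab: "k*(a+b) \<le> pi" using kth by simp
    have B1: "E1 * d2 \<le> C^2 * d1 * E2"
      using polarB[OF k1 r p a(1) b(1) kab] unfolding d1_def d2_def E1_def E2_def C_def .
    obtain t where t: "0 \<le> t" and teq: "cmod (x - complex_of_real t) + cmod (complex_of_real t - y) = cmod (x - cnj y)"
      using crossing_polar[OF r p a(1) b(1)] True th unfolding xr yr by auto
    have "Dinf \<theta> x y \<le> sqrt d2"
      using Dinf_upper[OF real_in_frontier[OF th t], of x y] teq nd2 by simp
    then have "C * sqrt d1 / sqrt d2 \<le> C * sqrt d1 / Dinf \<theta> x y"
      using D0 C0 d1 d2 by (intro divide_left_mono) (auto intro!: mult_pos_pos)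
    moreover have "sqrt E1 / sqrt E2 \<le> C * sqrt d1 / sqrt d2"
      by (rule ratio_le2[OF d1 d2 thf(2) thf(3) C0 B1])
    ultimately show ?thesis unfolding sdef thf(1) by simp
  next
    case False
    have B2: "E1 * d3 \<le> C^2 * d1 * E2"
    proof -
      have "k*\<theta> \<le> k*(a+b)" using False k1 by (intro mult_left_mono) auto
      then have kab: "k * ((\<theta>-a)+(\<theta>-b)) \<le> pi" using kth by (simp add: algebra_simps)
      have "0 < \<theta>-a" "0 < \<theta>-b" using a b by auto
      from polarB[OF k1 r p this kab] show ?thesis
        unfolding d1_def d3_def E1_def E2_def C_def cE1 cE2 cd1 .
    qed
    obtain t where t: "0 \<le> t" and teq: "cmod (rcis r (\<theta>-a) - complex_of_real t) + cmod (complex_of_real t - rcis p (\<theta>-b)) = cmod (rcis r (\<theta>-a) - cnj (rcis p (\<theta>-b)))"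
      using crossing_polar[OF r p, of "\<theta>-a" "\<theta>-b"] False a b th by auto
    have "cmod (rcis r (\<theta>-a) - cnj (rcis p (\<theta>-b))) = sqrt d3"
      by (subst cmod_sqrt) (simp add: cnj_rcis norm_rcis_diff_sq d3_def)
    moreover have "cmod (x - complex_of_real t * cis \<theta>) = cmod (rcis r (\<theta>-a) - complex_of_real t)"
      unfolding xr by (rule refl_dist)
    moreover have "cmod (complex_of_real t * cis \<theta> - y) = cmod (complex_of_real t - rcis p (\<theta>-b))"
      unfolding yr using refl_dist[of p b t \<theta>] by (simp add: norm_minus_commute)
    ultimately have "Dinf \<theta> x y \<le> sqrt d3"
      using Dinf_upper[OF ray2_in_frontier[OF th t], of x y] teq by simp
    then have "C * sqrt d1 / sqrt d3 \<le> C * sqrt d1 / Dinf \<theta> x y"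
      using D0 C0 d1 d3 by (intro divide_left_mono) (auto intro!: mult_pos_pos)
    moreover have "sqrt E1 / sqrt E2 \<le> C * sqrt d1 / sqrt d3"
      by (rule ratio_le2[OF d1 d3 thf(2) thf(3) C0 B2])
    ultimately show ?thesis unfolding sdef thf(1) by simp
  qed
  show ?thesis using part_i part_ii unfolding Cth by simp
qed

lemma Dinf_polar_lower:
  assumes th: "0 < \<theta>" "\<theta> < pi" and r: "0 < r" and p: "0 < p"
    and a: "0 < a" "a < \<theta>" and b: "0 < b" "b < \<theta>"
  shows "min (sqrt (r^2+p^2-2*r*p*cos (a+b))) (sqrt (r^2+p^2-2*r*p*cos ((\<theta>-a)+(\<theta>-b)))) \<le> Dinf \<theta> (rcis r a) (rcis p b)"
    "0 < r^2+p^2-2*r*p*cos (a+b)" "0 < r^2+p^2-2*r*p*cos ((\<theta>-a)+(\<theta>-b))"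
proof -
  define x where "x = rcis r a"
  define y where "y = rcis p b"
  define d2 where "d2 = r^2 + p^2 - 2*r*p*cos (a+b)"
  define d3 where "d3 = r^2 + p^2 - 2*r*p*cos ((\<theta>-a)+(\<theta>-b))"
  have nd2: "cmod (x - cnj y) = sqrt d2"
    by (subst cmod_sqrt) (simp add: x_def y_def cnj_rcis norm_rcis_diff_sq d2_def)
  have "cis \<theta> * cis \<theta> * cnj y = complex_of_real p * (cis \<theta> * cis \<theta> * cis (-b))"
    by (simp add: y_def cnj_rcis rcis_def cis_cnj)
  also have "cis \<theta> * cis \<theta> * cis (-b) = cis (2*\<theta> - b)" by (simp add: cis_mult)
  finally have "cis \<theta> * cis \<theta> * cnj y = rcis p (2*\<theta> - b)" by (simp add: rcis_def)
  moreover have "cos (a - (2*\<theta> - b)) = cos ((\<theta>-a)+(\<theta>-b))"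
    using cos_minus[of "(\<theta>-a)+(\<theta>-b)"] by (simp add: algebra_simps)
  ultimately have nd3: "cmod (x - cis \<theta> * cis \<theta> * cnj y) = sqrt d3"
    by (subst cmod_sqrt) (simp add: x_def norm_rcis_diff_sq d3_def)
  show "min (sqrt (r^2+p^2-2*r*p*cos (a+b))) (sqrt (r^2+p^2-2*r*p*cos ((\<theta>-a)+(\<theta>-b)))) \<le> Dinf \<theta> (rcis r a) (rcis p b)"
  proof -
    have "min (sqrt d2) (sqrt d3) \<le> Dinf \<theta> x y" using Dinf_lower[OF th, of x y] unfolding nd2 nd3 .
    then show ?thesis unfolding d2_def d3_def x_def y_def .
  qed
  show "0 < r^2+p^2-2*r*p*cos (a+b)" using r p a b th by (intro polar_pos) auto
  show "0 < r^2+p^2-2*r*p*cos ((\<theta>-a)+(\<theta>-b))" using r p a b th by (intro polar_pos) auto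
qed

lemma part2:
  assumes th: "0 < \<theta>" "\<theta> < pi" and c: "1 < c"
  shows "\<exists>x\<in>sector \<theta>. \<exists>y\<in>sector \<theta>. tanh (rho_S \<theta> x y / 2) < c * s_metric (sector \<theta>) x y"
proof -
  define r0 where "r0 = (c-1)/(c+1)"
  have r0: "0 < r0" "r0 < 1" using c by (auto simp: r0_def field_simps)
  define x where "x = rcis r0 (\<theta>/2)"
  define y where "y = rcis 1 (\<theta>/2)"
  have xs: "x \<in> sector \<theta>" "y \<in> sector \<theta>" using th r0 by (auto simp: x_def y_def intro!: rcis_sector)
  have D0: "0 < Dinf \<theta> x y"
  proof -
    have h: "0 < \<theta>/2" "\<theta>/2 < \<theta>" using th by auto
    note L = Dinf_polar_lower[OF th r0(1) zero_less_one h h]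
    have "0 < min (sqrt (r0^2+1^2-2*r0*1*cos (\<theta>/2+\<theta>/2))) (sqrt (r0^2+1^2-2*r0*1*cos ((\<theta>-\<theta>/2)+(\<theta>-\<theta>/2))))"
      using L(2,3) th by simp
    then show ?thesis using L(1) unfolding x_def y_def by linarith
  qed
  have Dle: "Dinf \<theta> x y \<le> r0 + 1"
    using Dinf_upper[OF real_in_frontier[OF th order_refl], of x y] r0 by (simp add: x_def y_def rcis_def norm_mult)
  have nxy: "cmod (x - y) = 1 - r0"
  proof -
    have "(cmod (x - y))^2 = (1 - r0)^2" unfolding x_def y_def norm_rcis_diff_sq by (simp add: power2_eq_square algebra_simps)
    then show ?thesis using r0 by (metis abs_of_nonneg norm_ge_zero power2_eq_imp_eq diff_ge_0_iff_ge less_imp_le)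
  qed
  have "c * ((1 - r0) / (r0 + 1)) \<le> c * ((1 - r0) / Dinf \<theta> x y)"
    using Dle D0 r0 c by (intro mult_left_mono divide_left_mono) auto
  moreover have "c * ((1 - r0) / (r0 + 1)) = 1"
  proof -
    have c1: "c + 1 \<noteq> 0" using c by simp
    have A: "1 - r0 = 2/(c+1)" using c1 by (simp add: r0_def field_simps)
    have B: "r0 + 1 = 2*c/(c+1)" using c1 by (simp add: r0_def field_simps)
    have pos: "0 < c * 2 + c * (c * 2)" using c by (intro add_pos_pos mult_pos_pos) auto
    have "(2/(c+1)) / (2*c/(c+1)) = 1/c" using c1 c pos by (simp add: field_simps)
    then have "(1 - r0) / (r0 + 1) = 1/c" unfolding A B .
    then show ?thesis using c by simp
  qed
  ultimately have "1 \<le> c * ((1 - r0) / Dinf \<theta> x y)" by linarith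
  then have "1 \<le> c * s_metric (sector \<theta>) x y" unfolding s_metric_Dinf nxy .
  then have "tanh (rho_S \<theta> x y / 2) < c * s_metric (sector \<theta>) x y" using tanh_real_lt_1 by (smt (verit))
  then show ?thesis using xs by blast
qed

lemma powr_lower:
  fixes t k :: real assumes t: "1 < t" and k: "0 \<le> k"
  shows "k * (t - 1) / t \<le> t powr k - 1"
proof -
  have "ln (1/t) \<le> 1/t - 1" using t by (intro ln_le_minus_one) auto
  then have l: "1 - 1/t \<le> ln t" using t by (simp add: ln_div)
  have "k * (t - 1) / t = k * (1 - 1/t)" using t by (simp add: field_simps)
  also have "\<dots> \<le> k * ln t" using l k by (rule mult_left_mono)
  also have "\<dots> \<le> exp (k * ln t) - 1" using exp_ge_add_one_self[of "k * ln t"] by linarith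
  also have "exp (k * ln t) = t powr k" using t by (simp add: powr_def)
  finally show ?thesis .
qed

lemma frac_lt: "0 < b \<Longrightarrow> 0 < d \<Longrightarrow> a*d < c*b \<Longrightarrow> a/b < c/(d::real)"
  by (simp add: field_simps)

lemma part3:
  assumes th: "0 < \<theta>" "\<theta> < pi" and c: "c < (pi / \<theta>) * sin (\<theta> / 2)"
  shows "\<exists>x\<in>sector \<theta>. \<exists>y\<in>sector \<theta>. c * s_metric (sector \<theta>) x y < tanh (rho_S \<theta> x y / 2)"
proof -
  define k where "k = pi/\<theta>"
  have k1: "1 \<le> k" using th by (simp add: k_def field_simps)
  have kth: "k * \<theta> = pi" using th by (simp add: k_def)
  define c' where "c' = max c 0"
  have sp: "0 < sin (\<theta>/2)" using th by (intro sin_gt_zero) auto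
  have Cpos: "0 < k * sin (\<theta>/2)" using k1 sp by simp
  have cC: "c < k * sin (\<theta>/2)" using c by (simp add: k_def)
  have c': "0 \<le> c'" "c \<le> c'" "c' < k * sin (\<theta>/2)" using cC Cpos by (auto simp: c'_def)
  define g where "g = (\<lambda>t::real. k * sqrt (1 + t^2 - 2*t*cos \<theta>) - c' * t * (t powr k + 1))"
  have eq2: "1 + 1^2 - 2*1*cos \<theta> = (2 * sin (\<theta>/2))^2"
    using one_minus_cos[of \<theta>] by (simp add: power_mult_distrib)
  have "sqrt (1 + 1^2 - 2*1*cos \<theta>) = 2 * sin (\<theta>/2)" unfolding eq2 real_sqrt_abs using sp by simp
  then have g1: "g 1 = 2 * (k * sin (\<theta>/2) - c')" by (simp add: g_def algebra_simps)
  have "0 < g 1" unfolding g1 using c' by simp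
  moreover have "isCont g 1" unfolding g_def by (intro continuous_intros) auto
  then have "(g \<longlongrightarrow> g 1) (at_right 1)"
    by (simp add: isCont_def filterlim_within_subset[of g "nhds (g 1)" 1 UNIV])
  ultimately have "eventually (\<lambda>t. 0 < g t) (at_right 1)" by (rule order_tendstoD(1)[rotated])
  then obtain bb where bb: "1 < bb" and gb: "\<And>t. 1 < t \<Longrightarrow> t < bb \<Longrightarrow> 0 < g t"
    unfolding eventually_at_right_field by auto
  define t where "t = (1 + bb)/2"
  have t1: "1 < t" and gt: "0 < g t" using bb gb by (auto simp: t_def)
  have t0: "0 < t" using t1 by simp
  have h: "0 < \<theta>/2" "\<theta>/2 < \<theta>" using th by auto
  define x where "x = rcis 1 (\<theta>/2)"
  define y where "y = rcis t (\<theta>/2)"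
  have xs: "x \<in> sector \<theta>" "y \<in> sector \<theta>" using th t0 by (auto simp: x_def y_def intro!: rcis_sector)
  define T where "T = t powr k"
  have T1: "1 < T" using t1 k1 by (simp add: T_def)
  note TF = th_formula[OF th zero_less_one t0 h h]
  have E1: "(1 powr (pi/\<theta>))^2 + (t powr (pi/\<theta>))^2 - 2*(1 powr (pi/\<theta>))*(t powr (pi/\<theta>))*cos (pi/\<theta>*(\<theta>/2-\<theta>/2)) = (T - 1)^2"
    by (simp add: T_def k_def power2_eq_square algebra_simps)
  have "cos (pi/\<theta>*(\<theta>/2+\<theta>/2)) = -1" using th by simp
  then have E2: "(1 powr (pi/\<theta>))^2 + (t powr (pi/\<theta>))^2 - 2*(1 powr (pi/\<theta>))*(t powr (pi/\<theta>))*cos (pi/\<theta>*(\<theta>/2+\<theta>/2)) = (T + 1)^2"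
    by (simp add: T_def k_def power2_eq_square algebra_simps)
  have thv: "tanh (rho_S \<theta> x y / 2) = (T - 1)/(T + 1)"
    using TF(1) T1 unfolding E1 E2 x_def y_def by simp
  define d2 where "d2 = 1 + t^2 - 2*t*cos \<theta>"
  note DL = Dinf_polar_lower[OF th zero_less_one t0 h h]
  have d2: "0 < d2" using DL(2) by (simp add: d2_def)
  have "min (sqrt d2) (sqrt d2) \<le> Dinf \<theta> x y" using DL(1) by (simp add: d2_def x_def y_def)
  then have Dd: "sqrt d2 \<le> Dinf \<theta> x y" by simp
  have nxy: "cmod (x - y) = t - 1"
  proof -
    have "(cmod (x - y))^2 = (t - 1)^2" unfolding x_def y_def norm_rcis_diff_sq by (simp add: power2_eq_square algebra_simps)
    then show ?thesis using t1 by (metis abs_of_nonneg norm_ge_zero power2_eq_imp_eq diff_ge_0_iff_ge less_imp_le)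
  qed
  have sq: "0 < sqrt d2" using d2 by simp
  have D0: "0 < Dinf \<theta> x y" using Dd sq by linarith
  have s_le: "s_metric (sector \<theta>) x y \<le> (t - 1) / sqrt d2"
    unfolding s_metric_Dinf nxy using Dd sq t1 D0 by (intro divide_left_mono) (auto intro!: mult_pos_pos)
  have s_ge: "0 \<le> s_metric (sector \<theta>) x y"
    unfolding s_metric_Dinf nxy using D0 t1 by simp
  have "c * s_metric (sector \<theta>) x y \<le> c' * s_metric (sector \<theta>) x y"
    using c'(2) s_ge by (rule mult_right_mono)
  also have "\<dots> \<le> c' * ((t - 1) / sqrt d2)" using s_le c'(1) by (rule mult_left_mono)
  also have "\<dots> < k * (t - 1) / (t * (T + 1))"
  proof -
    have gt': "c' * t * (T + 1) < k * sqrt d2" using gt by (simp add: g_def d2_def T_def)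
    have "c' * t * (T + 1) * (t - 1) < k * sqrt d2 * (t - 1)" by (rule mult_strict_right_mono[OF gt']) (use t1 in simp)
    then have "(c' * (t - 1)) * (t * (T + 1)) < (k * (t - 1)) * sqrt d2" by (simp add: algebra_simps)
    then have "(c' * (t - 1)) / sqrt d2 < (k * (t - 1)) / (t * (T + 1))"
      using sq t0 T1 by (intro frac_lt) auto
    then show ?thesis by simp
  qed
  also have "\<dots> \<le> (T - 1) / (T + 1)"
  proof -
    have "k * (t - 1) / t \<le> T - 1" unfolding T_def using t1 k1 by (intro powr_lower) auto
    then have "k * (t - 1) / t / (T + 1) \<le> (T - 1) / (T + 1)" using T1 by (intro divide_right_mono) auto
    then show ?thesis by (simp add: field_simps)
  qed
  finally have "c * s_metric (sector \<theta>) x y < (T - 1) / (T + 1)" .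
  then have "c * s_metric (sector \<theta>) x y < tanh (rho_S \<theta> x y / 2)" unfolding thv .
  then show ?thesis using xs by blast
qed

theorem theorem4p5:
  fixes \<theta> :: real
  assumes "0 < \<theta>" "\<theta> < pi"
  shows "(\<forall>x\<in>sector \<theta>. \<forall>y\<in>sector \<theta>.
            s_metric (sector \<theta>) x y \<le> tanh (rho_S \<theta> x y / 2) \<and>
            tanh (rho_S \<theta> x y / 2) \<le> (pi / \<theta>) * sin (\<theta> / 2) * s_metric (sector \<theta>) x y)
      \<and> (\<forall>c>1. \<exists>x\<in>sector \<theta>. \<exists>y\<in>sector \<theta>.
            tanh (rho_S \<theta> x y / 2) < c * s_metric (sector \<theta>) x y)
      \<and> (\<forall>c<(pi / \<theta>) * sin (\<theta> / 2). \<exists>x\<in>sector \<theta>. \<exists>y\<in>sector \<theta>.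
            c * s_metric (sector \<theta>) x y < tanh (rho_S \<theta> x y / 2))"
  using part1[OF assms] part2[OF assms] part3[OF assms] by blast

end
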